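(* With $F_n$ as defined in the context, $$\int_{1+(\log n)^{-1}}^{\infty}F_n(w)\,dw=O(n\log\log n)\qquad(n\to\infty).$$
   Context: For $w>0$ and integer $n\ge1$ let $a_n(w)=\sum_{j=0}^n w^j$, $b_n(w)=\sum_{j=1}^n jw^j$, $c_n(w)=\sum_{j=0}^n j^2w^j$, and $$F_n(w)=\frac{1}{2\sqrt{w}}\sqrt{\frac{c_n(w)}{a_n(w)}}\sqrt{\frac{a_n(w)c_n(w)-b_n(w)^2}{w\,a_n(w)^2}}.$$ $\log$ is the natural logarithm. *)

theory Defs
  imports "HOL-Analysis.Analysis" "HOL-Library.Landau_Symbols"
begin

definition a_n :: "nat \<Rightarrow> real \<Rightarrow> real" where
  "a_n n w = (\<Sum>j=0..n. w ^ j)"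

definition b_n :: "nat \<Rightarrow> real \<Rightarrow> real" where
  "b_n n w = (\<Sum>j=1..n. real j * w ^ j)"

definition c_n :: "nat \<Rightarrow> real \<Rightarrow> real" where
  "c_n n w = (\<Sum>j=0..n. (real j)^2 * w ^ j)"

definition F_n :: "nat \<Rightarrow> real \<Rightarrow> real" where
  "F_n n w = 1 / (2 * sqrt w) * sqrt (c_n n w / a_n n w)
     * sqrt ((a_n n w * c_n n w - (b_n n w)^2) / (w * (a_n n w)^2))"

end

theory Submission imports Defs "HOL-Real_Asymp.Real_Asymp" begin

definition T1 :: "nat \<Rightarrow> real \<Rightarrow> real" where
  "T1 n w = (\<Sum>j=0..n. (real n - real j) * w ^ j)"
definition T2 :: "nat \<Rightarrow> real \<Rightarrow> real" where
  "T2 n w = (\<Sum>j=0..n. (real n - real j)^2 * w ^ j)"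

lemma a_Suc: "a_n (Suc n) w = a_n n w + w^(Suc n)"
  by (simp add: a_n_def)

lemma T1_Suc: "T1 (Suc n) w = T1 n w + a_n n w"
proof -
  have "T1 (Suc n) w = (\<Sum>j=0..n. (real (Suc n) - real j) * w ^ j)"
    by (simp add: T1_def)
  also have "\<dots> = (\<Sum>j=0..n. (real n - real j) * w ^ j + w^j)"
    by (rule sum.cong) (auto simp: algebra_simps)
  finally show ?thesis by (simp add: T1_def a_n_def sum.distrib)
qed

lemma T2_Suc: "T2 (Suc n) w = T2 n w + 2 * T1 n w + a_n n w"
proof -
  have "T2 (Suc n) w = (\<Sum>j=0..n. (real (Suc n) - real j)^2 * w ^ j)"
    by (simp add: T2_def)
  also have "\<dots> = (\<Sum>j=0..n. (real n - real j)^2 * w ^ j + 2 * ((real n - real j) * w^j) + w^j)"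
    by (rule sum.cong) (auto simp: algebra_simps power2_eq_square)
  finally show ?thesis by (simp add: T1_def T2_def a_n_def sum.distrib sum_distrib_left)
qed

lemma geo: "(w - 1) * a_n n w = w^(Suc n) - 1"
  by (induction n) (auto simp: a_Suc algebra_simps a_n_def)

lemma T1_id: "(w - 1) * T1 n w = a_n n w - (real n + 1)"
proof (induction n)
  case 0 then show ?case by (simp add: T1_def a_n_def)
next
  case (Suc n)
  have "(w - 1) * T1 (Suc n) w = (w-1) * T1 n w + (w-1) * a_n n w" by (simp add: T1_Suc algebra_simps)
  then show ?case using Suc geo[of w n] by (simp add: a_Suc algebra_simps)
qed

lemma T2_id: "(w - 1) * T2 n w = 2 * T1 n w + a_n n w - (real n + 1)^2"
proof (induction n)
  case 0 then show ?case by (simp add: T1_def T2_def a_n_def)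
next
  case (Suc n)
  have "(w - 1) * T2 (Suc n) w = (w-1) * T2 n w + 2 * ((w-1) * T1 n w) + (w-1) * a_n n w"
    by (simp add: T2_Suc algebra_simps)
  then show ?case using Suc geo[of w n] T1_id[of w n] by (simp add: a_Suc T1_Suc algebra_simps power2_eq_square)
qed

lemma a_pos: "w > 0 \<Longrightarrow> a_n n w > 0"
proof -
  assume "w > 0"
  have "a_n n w \<ge> w^0" unfolding a_n_def
    by (rule member_le_sum) (use \<open>w>0\<close> in auto)
  then show ?thesis by simp
qed

lemma T2_bound: assumes "w > 1" shows "(w-1)^2 * T2 n w \<le> (w+1) * a_n n w"
proof -
  have "(w-1)^2 * T2 n w = (w-1) * ((w-1) * T2 n w)"
    by (simp add: power2_eq_square)
  also have "\<dots> = (w-1) * (2 * T1 n w + a_n n w - (real n + 1)^2)"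
    using T2_id[of w n] by simp
  also have "\<dots> = 2 * ((w-1) * T1 n w) + (w-1) * a_n n w - (w-1) * (real n + 1)^2"
    by (simp add: algebra_simps)
  also have "\<dots> \<le> 2 * a_n n w + (w-1) * a_n n w"
  proof -
    have "0 \<le> (w - 1) * (real n + 1)^2" using assms by simp
    then show ?thesis using T1_id[of w n] by linarith
  qed
  finally show ?thesis by (simp add: algebra_simps)
qed

lemma T2_expand: "T2 n w = (real n)^2 * a_n n w - 2 * real n * b_n n w + c_n n w"
proof -
  have b: "b_n n w = (\<Sum>j=0..n. real j * w ^ j)"
    unfolding b_n_def by (simp add: sum.atLeast_Suc_atMost[of 0 n] atLeastSucAtMost_greaterThanAtMost)
  show ?thesis unfolding T2_def a_n_def c_n_def b sum_distrib_left sum_subtractf[symmetric] sum.distrib[symmetric]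
    by (rule sum.cong) (auto simp: power2_eq_square algebra_simps)
qed

lemma b_alt: "b_n n w = (\<Sum>j=0..n. real j * w ^ j)"
  unfolding b_n_def by (simp add: sum.atLeast_Suc_atMost[of 0 n] atLeastSucAtMost_greaterThanAtMost)

lemma c_le: assumes "w \<ge> 0" shows "c_n n w \<le> (real n)^2 * a_n n w"
  unfolding c_n_def a_n_def sum_distrib_left
  by (rule sum_mono) (use assms in \<open>auto intro!: mult_right_mono power_mono\<close>)

lemma V_id: "a_n n w * c_n n w - (b_n n w)^2 = a_n n w * T2 n w - (real n * a_n n w - b_n n w)^2"
  unfolding T2_expand by (simp add: power2_eq_square algebra_simps)

lemma V_nonneg: assumes "w \<ge> 0" shows "a_n n w * c_n n w - (b_n n w)^2 \<ge> 0"
proof -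
  let ?A = "\<lambda>i j. (real i)^2 * w^i * w^j"
  let ?B = "\<lambda>i j. w^i * ((real j)^2 * w^j)"
  let ?C = "\<lambda>i j. (real i * w^i) * (real j * w^j)"
  have "(\<Sum>i=0..n. \<Sum>j=0..n. (real i - real j)^2 * (w^i * w^j))
      = (\<Sum>i=0..n. \<Sum>j=0..n. ?A i j + ?B i j - 2 * ?C i j)"
    by (intro sum.cong refl) (simp add: power2_eq_square algebra_simps)
  also have "\<dots> = (\<Sum>i=0..n. \<Sum>j=0..n. ?A i j) + (\<Sum>i=0..n. \<Sum>j=0..n. ?B i j) - 2 * (\<Sum>i=0..n. \<Sum>j=0..n. ?C i j)"
    by (simp add: sum.distrib sum_subtractf sum_distrib_left)
  also have "\<dots> = c_n n w * a_n n w + a_n n w * c_n n w - 2 * (b_n n w * b_n n w)"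
    unfolding a_n_def c_n_def b_alt sum_product
    by (simp add: algebra_simps)
  also have "\<dots> = 2 * (a_n n w * c_n n w - (b_n n w)^2)"
    by (simp add: power2_eq_square algebra_simps)
  finally have eq: "(\<Sum>i=0..n. \<Sum>j=0..n. (real i - real j)^2 * (w^i * w^j)) = 2 * (a_n n w * c_n n w - (b_n n w)^2)" .
  have "0 \<le> (\<Sum>i=0..n. \<Sum>j=0..n. (real i - real j)^2 * (w^i * w^j))"
    using assms by (intro sum_nonneg) auto
  then show ?thesis using eq by simp
qed

lemma F_nonneg: assumes "w > 0" shows "F_n n w \<ge> 0"
proof -
  have "a_n n w > 0" using a_pos assms by auto
  moreover have "c_n n w \<ge> 0" unfolding c_n_def using assms by (intro sum_nonneg) auto
  ultimately show ?thesis unfolding F_n_def using V_nonneg[of w n] assms by (auto intro!: mult_nonneg_nonneg)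
qed

lemma F_le: assumes "w > 1" shows "F_n n w \<le> real n / (sqrt w * (w - 1))"
proof -
  define a where "a = a_n n w"
  define c where "c = c_n n w"
  define V where "V = a_n n w * c_n n w - (b_n n w)^2"
  have apos: "a > 0" using a_pos assms a_def by auto
  have "c / a \<le> (real n)^2" using c_le[of w n] apos assms by (simp add: a_def c_def divide_le_eq)
  then have s1: "sqrt (c/a) \<le> real n" using real_sqrt_le_mono by fastforce
  have "V \<le> a * T2 n w" unfolding V_def a_def using V_id[of n w] by simp
  also have "\<dots> \<le> a * ((w+1) * a / (w-1)^2)"
    using T2_bound[OF assms, of n] apos assms by (intro mult_left_mono) (auto simp: le_divide_eq a_def algebra_simps)
  also have "\<dots> = a^2 * ((w+1) / (w-1)^2)" by (simp add: power2_eq_square)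
  finally have "V \<le> a^2 * ((w+1) / (w-1)^2)" .
  then have "V / a^2 \<le> (w+1) / (w-1)^2"
    using apos by (simp add: divide_le_eq mult.commute)
  then have "(V / a^2) / w \<le> ((w+1) / (w-1)^2) / w"
    using assms by (intro divide_right_mono) auto
  then have "V / (w * a^2) \<le> (w+1) / (w * (w-1)^2)"
    by (simp add: divide_divide_eq_left mult.commute)
  also have "\<dots> \<le> (2 / (w-1))^2"
    using assms by (simp add: power_divide divide_le_eq field_simps)
  finally have s2: "sqrt (V / (w * a^2)) \<le> 2 / (w-1)"
    using assms real_sqrt_le_mono by fastforce
  have "F_n n w = 1 / (2 * sqrt w) * sqrt (c/a) * sqrt (V / (w * a^2))"
    unfolding F_n_def a_def c_def V_def ..
  also have "\<dots> \<le> 1 / (2 * sqrt w) * real n * (2 / (w-1))"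
  proof -
    have "c \<ge> 0" unfolding c_def c_n_def using assms by (intro sum_nonneg) auto
    moreover have "V \<ge> 0" unfolding V_def using V_nonneg[of w n] assms by simp
    ultimately show ?thesis using s1 s2 assms apos by (intro mult_mono) auto
  qed
  finally show ?thesis using assms by simp
qed


lemma deriv_G:
  fixes s :: real assumes s: "s > 1"
  shows "((\<lambda>w. ln (sqrt w - 1) - ln (sqrt w + 1)) has_real_derivative 1/(s*(s^2-1))) (at (s^2))"
proof -
  have sq: "sqrt (s^2) = s" using s by simp
  have ds: "(sqrt has_real_derivative inverse s / 2) (at (s^2))"
    using DERIV_real_sqrt[of "s^2"] s sq by simp
  have d1: "((\<lambda>w. sqrt w - 1) has_real_derivative inverse s / 2) (at (s^2))"
    using DERIV_diff[OF ds DERIV_const[of 1]] by simp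
  have d2: "((\<lambda>w. sqrt w + 1) has_real_derivative inverse s / 2) (at (s^2))"
    using DERIV_add[OF ds DERIV_const[of 1]] by simp
  have l1: "(ln has_real_derivative 1 / (s - 1)) (at (sqrt (s^2) - 1))"
    using DERIV_ln_divide[of "s - 1"] s sq by simp
  have l2: "(ln has_real_derivative 1 / (s + 1)) (at (sqrt (s^2) + 1))"
    using DERIV_ln_divide[of "s + 1"] s sq by simp
  have "((\<lambda>w. ln (sqrt w - 1) - ln (sqrt w + 1)) has_real_derivative
     (1 / (s - 1) * (inverse s / 2) - 1 / (s + 1) * (inverse s / 2))) (at (s^2))"
    by (rule DERIV_diff[OF DERIV_chain2[OF l1 d1] DERIV_chain2[OF l2 d2]])
  moreover have "1 / (s - 1) * (inverse s / 2) - 1 / (s + 1) * (inverse s / 2) = 1 / (s * (s^2 - 1))"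
  proof -
    have a: "1 / (s - 1) * (inverse s / 2) = 1 / (2 * s * (s - 1))" by (simp add: inverse_eq_divide)
    have b: "1 / (s + 1) * (inverse s / 2) = 1 / (2 * s * (s + 1))" by (simp add: inverse_eq_divide)
    have a2: "1 / (2 * s * (s - 1)) = (s + 1) / (2 * s * (s - 1) * (s + 1))" using s by simp
    have b2: "1 / (2 * s * (s + 1)) = (s - 1) / (2 * s * (s - 1) * (s + 1))" using s by simp
    have d: "(s + 1) / (2 * s * (s - 1) * (s + 1)) - (s - 1) / (2 * s * (s - 1) * (s + 1))
       = ((s + 1) - (s - 1)) / (2 * s * (s - 1) * (s + 1))" by (rule diff_divide_distrib[symmetric])
    have e: "((s + 1) - (s - 1)) / (2 * s * (s - 1) * (s + 1)) = 1 / (s * (s - 1) * (s + 1))" by simp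
    have f: "s * (s^2 - 1) = s * (s - 1) * (s + 1)" by (simp add: power2_eq_square algebra_simps)
    show ?thesis unfolding a b a2 b2 d e f ..
  qed
  ultimately show ?thesis by simp
qed

lemma g_has_integral:
  assumes c: "c > 1"
  shows "((\<lambda>w. 1 / (sqrt w * (w - 1))) has_integral (ln (sqrt c + 1) - ln (sqrt c - 1))) {c..}"
proof (intro has_integral_to_inf)
  define G where "G = (\<lambda>w::real. ln (sqrt w - 1) - ln (sqrt w + 1))"
  have der: "(G has_real_derivative 1 / (sqrt w * (w - 1))) (at w)" if "w > 1" for w
  proof -
    have s: "sqrt w > 1" using that by simp
    have "((\<lambda>w. ln (sqrt w - 1) - ln (sqrt w + 1)) has_real_derivative 1/(sqrt w*((sqrt w)^2-1))) (at ((sqrt w)^2))"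
      by (rule deriv_G) (use s in auto)
    then show ?thesis using that unfolding G_def by simp
  qed
  have int: "((\<lambda>w. 1 / (sqrt w * (w - 1))) has_integral (G y - G c)) {c..y}" if "y \<ge> c" for y
  proof (rule fundamental_theorem_of_calculus)
    show "c \<le> y" using that .
    fix x assume "x \<in> {c..y}"
    then have "x > 1" using c by auto
    then have "(G has_vector_derivative 1 / (sqrt x * (x - 1))) (at x)"
      using der has_real_derivative_iff_has_vector_derivative by blast
    then show "(G has_vector_derivative 1 / (sqrt x * (x - 1))) (at x within {c..y})"
      by (rule has_vector_derivative_at_within)
  qed
  show "(\<lambda>w. 1 / (sqrt w * (w - 1))) integrable_on {c..y}" for y
  proof (cases "y \<ge> c")
    case True then show ?thesis using int has_integral_integrable by blast
  next
    case False then have "{c..y} = {}" by simp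
    then show ?thesis by (simp only: integrable_on_empty)
  qed
  have ev: "\<forall>\<^sub>F y in at_top. integral {c..y} (\<lambda>w. 1 / (sqrt w * (w - 1))) = G y - G c"
    by (rule eventually_at_top_linorderI[of c]) (rule integral_unique[OF int])
  have "(G \<longlongrightarrow> 0) at_top"
    unfolding G_def by real_asymp
  then have lim: "((\<lambda>y::real. G y - G c) \<longlongrightarrow> 0 - G c) at_top"
    by (intro tendsto_diff tendsto_const)
  have eq: "0 - G c = ln (sqrt c + 1) - ln (sqrt c - 1)" by (simp add: G_def)
  show "((\<lambda>y. integral {c..y} (\<lambda>w. 1 / (sqrt w * (w - 1)))) \<longlongrightarrow> ln (sqrt c + 1) - ln (sqrt c - 1)) at_top"
    unfolding tendsto_cong[OF ev] eq[symmetric] by (rule lim)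
next
  show "0 \<le> 1 / (sqrt y * (y - 1))" if "c \<le> y" for y using that c by auto
qed


lemma a_cont: "continuous_on S (\<lambda>w. a_n n w)" unfolding a_n_def by (intro continuous_intros)
lemma b_cont: "continuous_on S (\<lambda>w. b_n n w)" unfolding b_n_def by (intro continuous_intros)
lemma c_cont: "continuous_on S (\<lambda>w. c_n n w)" unfolding c_n_def by (intro continuous_intros)

lemma F_cont: "continuous_on {0<..} (F_n n)"
proof -
  have "continuous_on {0<..} (\<lambda>w. 1 / (2 * sqrt w) * sqrt (c_n n w / a_n n w)
     * sqrt ((a_n n w * c_n n w - (b_n n w)^2) / (w * (a_n n w)^2)))"
    by (intro continuous_intros a_cont b_cont c_cont) (auto dest: a_pos[of _ n])
  then show ?thesis unfolding F_n_def[abs_def] .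
qed

lemma key:
  assumes c: "c > 1"
  shows "F_n n integrable_on {c..} \<and> 0 \<le> integral {c..} (F_n n) \<and>
         integral {c..} (F_n n) \<le> real n * (ln (sqrt c + 1) - ln (sqrt c - 1))"
proof -
  let ?g = "\<lambda>w. real n * (1 / (sqrt w * (w - 1)))"
  have gi: "(?g has_integral real n * (ln (sqrt c + 1) - ln (sqrt c - 1))) {c..}"
    by (intro has_integral_mult_right g_has_integral c)
  have meas: "F_n n \<in> borel_measurable (lebesgue_on {c..})"
    by (rule continuous_imp_measurable_on_sets_lebesgue)
       (use c in \<open>auto intro: continuous_on_subset[OF F_cont]\<close>)
  have bound: "norm (F_n n w) \<le> ?g w" if "w \<in> {c..}" for w
    using that c F_nonneg[of w n] F_le[of w n] by auto
  have fi: "F_n n integrable_on {c..}"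
    by (rule measurable_bounded_by_integrable_imp_integrable[OF meas _ bound])
       (use gi in auto)
  have "integral {c..} (F_n n) \<le> integral {c..} ?g"
    using bound by (intro integral_le[OF fi has_integral_integrable[OF gi]]) (force dest: abs_le_D1)
  also have "\<dots> = real n * (ln (sqrt c + 1) - ln (sqrt c - 1))"
    using gi by (rule integral_unique)
  finally have le: "integral {c..} (F_n n) \<le> real n * (ln (sqrt c + 1) - ln (sqrt c - 1))" .
  have "0 \<le> integral {c..} (F_n n)"
    using fi c F_nonneg[of _ n] by (intro integral_nonneg) auto
  then show ?thesis using fi le by blast
qed

lemma logbound:
  assumes L: "L \<ge> 1"
  shows "ln (sqrt (1 + 1/L) + 1) - ln (sqrt (1 + 1/L) - 1) \<le> 4 + ln L"
proof -
  define c where "c = 1 + 1/L"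
  have Lp: "L > 0" using L by simp
  have "1/L > 0" using Lp by simp
  then have c1: "c > 1" unfolding c_def by linarith
  have "1/L \<le> 1" using L by simp
  then have c2: "c \<le> 4" unfolding c_def by linarith
  have sc1: "sqrt c > 1" using c1 by simp
  have "sqrt c \<le> sqrt 4" using c2 by (rule real_sqrt_le_mono)
  then have sc2: "sqrt c \<le> 2" by simp
  have sq: "sqrt c * sqrt c = c" using c1 by simp
  have prod: "(sqrt c - 1) * (sqrt c + 1) = c - 1"
    by (simp only: ring_distribs sq)
  have "(sqrt c - 1) * (sqrt c + 1) \<le> (sqrt c - 1) * 3"
    using sc1 sc2 by (intro mult_left_mono) auto
  then have le1: "(c - 1) / 3 \<le> sqrt c - 1" unfolding prod by simp
  have cm1: "c - 1 = 1 / L" unfolding c_def by simp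
  have pos1: "(c - 1) / 3 > 0" using c1 by simp
  have l1: "ln ((c - 1) / 3) \<le> ln (sqrt c - 1)"
    using ln_le_cancel_iff[of "(c - 1) / 3" "sqrt c - 1"] pos1 le1 sc1 by simp
  have pos2: "sqrt c + 1 > 0" using sc1 by linarith
  have le3: "sqrt c + 1 \<le> 3" using sc2 by linarith
  have l2: "ln (sqrt c + 1) \<le> ln 3" using ln_le_cancel_iff[of "sqrt c + 1" 3] pos2 le3 by simp
  have e3: "(c - 1) / 3 = 1 / (L * 3)" unfolding cm1 by simp
  have "ln ((c - 1) / 3) = ln 1 - ln (L * 3)" unfolding e3 ln_div using Lp by simp
  moreover have "ln (L * 3) = ln L + ln 3" using Lp by (simp add: ln_mult)
  ultimately have l3: "ln ((c - 1) / 3) = - (ln L + ln 3)" by simp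
  have l4: "ln (3::real) \<le> 2" using ln_le_minus_one[of 3] by simp
  show ?thesis unfolding c_def[symmetric] using l1 l2 l3 l4 by linarith
qed

theorem proposition3p3:
  shows "(\<forall>\<^sub>F n in at_top. F_n n integrable_on {1 + 1 / ln (real n)..}) \<and>
    (\<lambda>n. integral {1 + 1 / ln (real n)..} (F_n n)) \<in> O(\<lambda>n. real n * ln (ln (real n)))"
proof -
  have ev1: "\<forall>\<^sub>F n in at_top. ln (ln (real n)) \<ge> 1"
  proof -
    have "filterlim (\<lambda>n::nat. ln (ln (real n))) at_top at_top" by real_asymp
    then show ?thesis by (simp add: filterlim_at_top)
  qed
  have ev2: "\<forall>\<^sub>F n in at_top. (n::nat) \<ge> 2" by (rule eventually_ge_at_top)
  have L: "ln (real n) \<ge> 1" if "ln (ln (real n)) \<ge> 1" "n \<ge> 2" for n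
  proof -
    have "ln (real n) > 0" using that by auto
    then have "exp 1 \<le> ln (real n)" using that ln_ge_iff by blast
    moreover have "(1::real) \<le> exp 1" by simp
    ultimately show ?thesis by linarith
  qed
  have K: "F_n n integrable_on {1 + 1 / ln (real n)..} \<and>
      norm (integral {1 + 1 / ln (real n)..} (F_n n)) \<le> 5 * norm (real n * ln (ln (real n)))"
    if h: "ln (ln (real n)) \<ge> 1" "n \<ge> 2" for n
  proof -
    have Ln: "ln (real n) \<ge> 1" using L h by blast
    have c: "1 + 1 / ln (real n) > 1" using Ln by simp
    note k = key[OF c, of n]
    have "integral {1 + 1 / ln (real n)..} (F_n n) \<le> real n * (4 + ln (ln (real n)))"
      using k logbound[OF Ln] by (meson mult_left_mono of_nat_0_le_iff order_trans)
    also have "\<dots> \<le> real n * (5 * ln (ln (real n)))"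
      using h by (intro mult_left_mono) auto
    finally show ?thesis using k h by (simp add: abs_mult)
  qed
  show ?thesis
  proof
    show "\<forall>\<^sub>F n in at_top. F_n n integrable_on {1 + 1 / ln (real n)..}"
      using ev1 ev2 by eventually_elim (use K in blast)
    show "(\<lambda>n. integral {1 + 1 / ln (real n)..} (F_n n)) \<in> O(\<lambda>n. real n * ln (ln (real n)))"
      by (rule bigoI[of _ 5]) (use ev1 ev2 in \<open>eventually_elim, use K in blast\<close>)
  qed
qed

end
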